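(* Every good set is a basis of $\mathbb R^{2k}$.
   Context: Let $k\ge2$, $n=2k-1$. Let $e_1,\dots,e_k$ be the standard basis of $\mathbb R^k$ and for $r\in\mathbb R$ let $r_{(k)}=(r,\dots,r)\in\mathbb R^k$. For $j=1,\dots,k$ define points of $\mathbb R^{2k}=\mathbb R^k\times\mathbb R^k$: $A_j=(e_j,0_{(k)})$, $B_j=\frac{1}{2n}(2_{(k)}-e_j,\,2_{(k)}-e_j)$, $C_j=(0_{(k)},e_j)$. Let $A=\{A_j\}$, $B=\{B_j\}$, $C=\{C_j\}$, $X=A\cup B\cup C$. A subset $S\subset X$ with $2k$ elements is good if it contains no set of the form $\{A_j,B_j,C_j\}$ and $S\neq A\cup C$. *)

theory Defs
  imports "HOL-Analysis.Analysis"
begin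

text \<open>R^{2k} is modelled as R^k x R^k, i.e. the product type (real^'k) x (real^'k),
  where k = CARD('k). The standard basis vector e_j is axis j 1, and r_(k) is vec r.\<close>

definition nval :: "'k::finite itself \<Rightarrow> real" where
  "nval _ = 2 * real CARD('k) - 1"

definition ptA :: "'k::finite \<Rightarrow> (real^'k) \<times> (real^'k)" where
  "ptA j = (axis j 1, 0)"

definition ptB :: "'k::finite \<Rightarrow> (real^'k) \<times> (real^'k)" where
  "ptB j = (1 / (2 * nval TYPE('k))) *\<^sub>R (vec 2 - axis j 1, vec 2 - axis j 1)"

definition ptC :: "'k::finite \<Rightarrow> (real^'k) \<times> (real^'k)" where
  "ptC j = (0, axis j 1)"

definition setA :: "((real^'k::finite) \<times> (real^'k)) set" where
  "setA = range ptA"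

definition setB :: "((real^'k::finite) \<times> (real^'k)) set" where
  "setB = range ptB"

definition setC :: "((real^'k::finite) \<times> (real^'k)) set" where
  "setC = range ptC"

definition setX :: "((real^'k::finite) \<times> (real^'k)) set" where
  "setX = setA \<union> setB \<union> setC"

definition good :: "((real^'k::finite) \<times> (real^'k)) set \<Rightarrow> bool" where
  "good S \<longleftrightarrow> S \<subseteq> setX \<and> card S = 2 * CARD('k)
     \<and> (\<forall>j. \<not> {ptA j, ptB j, ptC j} \<subseteq> S)
     \<and> S \<noteq> setA \<union> setC"

end

theory Submission
  imports Defs
begin

lemma nval_pos: "nval TYPE('k::finite) > 0"
proof -
  have "CARD('k) \<ge> 1" using card_ge_0_finite[of "UNIV::'k set"] by simp
  then have "real CARD('k) \<ge> 1" by simp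
  then show ?thesis unfolding nval_def by linarith
qed

lemma delta_sum[simp]: "(\<Sum>j\<in>UNIV. (x j::real) * (if i = j then 1 else 0)) = x (i::'k::finite)"
proof -
  have "(\<Sum>j\<in>UNIV. (x j::real) * (if i = j then 1 else 0)) = (\<Sum>j\<in>UNIV. if i = j then x j else 0)"
    by (rule sum.cong) auto
  then show ?thesis by simp
qed

lemma ptA_eq[simp]: "ptA i = ptA j \<longleftrightarrow> i = j"
  unfolding ptA_def by (simp add: axis_eq_axis)

lemma ptC_eq[simp]: "ptC i = ptC j \<longleftrightarrow> i = j"
  unfolding ptC_def by (simp add: axis_eq_axis)

lemma ptA_C[simp]: "ptA i \<noteq> ptC j"
  unfolding ptA_def ptC_def by (simp add: axis_eq_axis)

lemma ptB_fst: "fst (ptB (j::'k::finite)) $ i = (1 / (2 * nval TYPE('k))) * (2 - (if i = j then 1 else 0))"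
  unfolding ptB_def by (simp add: axis_def)

lemma ptB_snd: "snd (ptB (j::'k::finite)) $ i = (1 / (2 * nval TYPE('k))) * (2 - (if i = j then 1 else 0))"
  unfolding ptB_def by (simp add: axis_def)

lemma ptB_eq[simp]: "ptB i = ptB (j::'k::finite) \<longleftrightarrow> i = j"
proof
  assume "ptB i = ptB j"
  then have "fst (ptB i) $ i = fst (ptB j) $ i" by simp
  then show "i = j" using nval_pos[where 'k='k] by (simp add: ptB_fst split: if_splits)
qed simp

lemma ptA_B[simp]: "ptA i \<noteq> ptB (j::'k::finite)"
proof
  assume "ptA i = ptB j"
  then have "snd (ptA i) $ j = snd (ptB j) $ j" by simp
  then show False using nval_pos[where 'k='k] by (simp add: ptB_snd ptA_def)
qed

lemma ptC_B[simp]: "ptC i \<noteq> ptB (j::'k::finite)"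
proof
  assume "ptC i = ptB j"
  then have "fst (ptC i) $ j = fst (ptB j) $ j" by simp
  then show False using nval_pos[where 'k='k] by (simp add: ptB_fst ptC_def)
qed

lemma pt_sym[simp]: "ptB j \<noteq> ptA i" "ptB j \<noteq> ptC i" "ptC j \<noteq> ptA i"
  using ptA_B[of i j] ptC_B[of i j] ptA_C[of i j] by metis+

lemma fstA: "fst (\<Sum>j\<in>UNIV. (x j) *\<^sub>R ptA (j::'k::finite)) $ i = x i"
  by (simp add: fst_sum sum_component ptA_def axis_def)

lemma sndA: "snd (\<Sum>j\<in>UNIV. (x j) *\<^sub>R ptA (j::'k::finite)) $ i = 0"
  by (simp add: snd_sum sum_component ptA_def)

lemma fstC: "fst (\<Sum>j\<in>UNIV. (x j) *\<^sub>R ptC (j::'k::finite)) $ i = 0"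
  by (simp add: fst_sum sum_component ptC_def)

lemma sndC: "snd (\<Sum>j\<in>UNIV. (x j) *\<^sub>R ptC (j::'k::finite)) $ i = x i"
  by (simp add: snd_sum sum_component ptC_def axis_def)

lemma Bsum_aux: "(\<Sum>j\<in>UNIV. (x j::real) * (c * (2 - (if i = j then 1 else 0)))) = c * (2 * sum x UNIV - x (i::'k::finite))"
proof -
  have "(\<Sum>j\<in>UNIV. x j * (c * (2 - (if i = j then 1 else 0)))) = (\<Sum>j\<in>UNIV. 2 * c * x j - c * (if i = j then x j else 0))"
    by (rule sum.cong) (auto simp: algebra_simps)
  also have "\<dots> = 2 * c * sum x UNIV - c * x i"
    by (simp add: sum_subtractf sum_distrib_left[symmetric])
  finally show ?thesis by (simp add: algebra_simps)
qed

lemma fstB: "fst (\<Sum>j\<in>UNIV. (x j) *\<^sub>R ptB (j::'k::finite)) $ i = (1 / (2 * nval TYPE('k))) * (2 * sum x UNIV - x i)"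
  by (simp add: fst_sum sum_component ptB_fst Bsum_aux[symmetric])

lemma sndB: "snd (\<Sum>j\<in>UNIV. (x j) *\<^sub>R ptB (j::'k::finite)) $ i = (1 / (2 * nval TYPE('k))) * (2 * sum x UNIV - x i)"
  by (simp add: snd_sum sum_component ptB_snd Bsum_aux[symmetric])

theorem mainTheorem6:
  fixes S :: "((real^'k::finite) \<times> (real^'k)) set"
  assumes "CARD('k) \<ge> 2"
    and "good S"
  shows "independent S \<and> span S = UNIV"
proof -
  have sub: "S \<subseteq> setX" and cardS: "card S = 2 * CARD('k)"
    and notri: "\<And>j. \<not> {ptA j, ptB j, ptC j} \<subseteq> S" and neq: "S \<noteq> setA \<union> setC"
    using assms(2) unfolding good_def by auto
  define a where "a = {j. ptA j \<in> S}"
  define b where "b = {j. ptB j \<in> S}"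
  define c where "c = {j. ptC j \<in> S}"
  have Seq: "S = ptA ` a \<union> ptB ` b \<union> ptC ` c"
    using sub unfolding a_def b_def c_def setX_def setA_def setB_def setC_def by auto
  have finS: "finite S" using Seq by simp
  have "card S = card (ptA ` a) + card (ptB ` b) + card (ptC ` c)"
    unfolding Seq
    by (subst card_Un_disjoint; (subst card_Un_disjoint)?) (auto simp: card_Un_disjoint)
  also have "\<dots> = card a + card b + card c"
    by (simp add: card_image inj_on_def)
  also have "\<dots> = (\<Sum>j\<in>UNIV. of_bool (j \<in> a) + of_bool (j \<in> b) + of_bool (j \<in> c))"
    by (simp add: sum.distrib)
  finally have sumeq: "(\<Sum>j\<in>UNIV. of_bool (j \<in> a) + of_bool (j \<in> b) + of_bool (j \<in> c)) = (\<Sum>j\<in>(UNIV::'k set). 2::nat)"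
    using cardS by simp
  have two: "of_bool (j \<in> a) + of_bool (j \<in> b) + of_bool (j \<in> c) = (2::nat)" for j
  proof (rule ccontr)
    assume "of_bool (j \<in> a) + of_bool (j \<in> b) + of_bool (j \<in> c) \<noteq> (2::nat)"
    moreover have le: "of_bool (i \<in> a) + of_bool (i \<in> b) + of_bool (i \<in> c) \<le> (2::nat)" for i
      using notri[of i] unfolding a_def b_def c_def by auto
    ultimately have lt: "of_bool (j \<in> a) + of_bool (j \<in> b) + of_bool (j \<in> c) < (2::nat)"
      using le[of j] by linarith
    have "(\<Sum>j\<in>UNIV. of_bool (j \<in> a) + of_bool (j \<in> b) + of_bool (j \<in> c)) < (\<Sum>j\<in>(UNIV::'k set). 2::nat)"
      apply (rule sum_strict_mono_ex1)
        apply simp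
      using le apply blast
      using lt by blast
    then show False using sumeq by simp
  qed
  have mem: "(j \<notin> a \<longrightarrow> j \<in> b \<and> j \<in> c) \<and> (j \<notin> b \<longrightarrow> j \<in> a \<and> j \<in> c) \<and> (j \<notin> c \<longrightarrow> j \<in> a \<and> j \<in> b)" for j
    using two[of j] by (cases "j\<in>a"; cases "j\<in>b"; cases "j\<in>c") simp_all
  have bne: "b \<noteq> {}"
  proof
    assume "b = {}"
    then have "a = UNIV" "c = UNIV" using mem by auto
    then have "S = setA \<union> setC" using Seq \<open>b = {}\<close> unfolding setA_def setC_def by auto
    then show False using neq by simp
  qed
  define cc where "cc = 1 / (2 * nval TYPE('k))"
  have ccpos: "cc > 0" unfolding cc_def using nval_pos[where 'k='k] by simp
  have indep: "independent S"
  proof (rule independent_if_scalars_zero[OF finS])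
    fix f x
    assume fsum: "(\<Sum>x\<in>S. f x *\<^sub>R x) = 0" and xS: "x \<in> S"
    define g where "g x = (if x \<in> S then f x else 0)" for x
    define \<alpha> where "\<alpha> j = g (ptA j)" for j
    define \<beta> where "\<beta> j = g (ptB j)" for j
    define \<gamma> where "\<gamma> j = g (ptC j)" for j
    have "(\<Sum>x\<in>S. f x *\<^sub>R x) = (\<Sum>x\<in>setX. g x *\<^sub>R x)"
      apply (rule sum.mono_neutral_cong_left)
      using sub by (auto simp: g_def setX_def setA_def setB_def setC_def)
    also have "\<dots> = (\<Sum>x\<in>range ptA. g x *\<^sub>R x) + (\<Sum>x\<in>range ptB. g x *\<^sub>R x) + (\<Sum>x\<in>range ptC. g x *\<^sub>R x)"
      unfolding setX_def setA_def setB_def setC_def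
      by (subst sum.union_disjoint; (subst sum.union_disjoint)?) auto
    also have "\<dots> = (\<Sum>j\<in>UNIV. \<alpha> j *\<^sub>R ptA j) + (\<Sum>j\<in>UNIV. \<beta> j *\<^sub>R ptB j) + (\<Sum>j\<in>UNIV. \<gamma> j *\<^sub>R ptC j)"
      unfolding \<alpha>_def \<beta>_def \<gamma>_def
      by (simp add: sum.reindex inj_on_def)
    finally have E: "(\<Sum>j\<in>UNIV. \<alpha> j *\<^sub>R ptA j) + (\<Sum>j\<in>UNIV. \<beta> j *\<^sub>R ptB j) + (\<Sum>j\<in>UNIV. \<gamma> j *\<^sub>R ptC j) = 0"
      using fsum by simp
    define T where "T = sum \<beta> UNIV"
    have E1: "\<alpha> i + cc * (2 * T - \<beta> i) = 0" for i
    proof -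
      have "fst ((\<Sum>j\<in>UNIV. \<alpha> j *\<^sub>R ptA j) + (\<Sum>j\<in>UNIV. \<beta> j *\<^sub>R ptB j) + (\<Sum>j\<in>UNIV. \<gamma> j *\<^sub>R ptC j)) $ i = 0"
        using E by simp
      then show ?thesis unfolding T_def cc_def by (simp only: fst_add vector_add_component fstA fstB fstC)
    qed
    have E2: "\<gamma> i + cc * (2 * T - \<beta> i) = 0" for i
    proof -
      have "snd ((\<Sum>j\<in>UNIV. \<alpha> j *\<^sub>R ptA j) + (\<Sum>j\<in>UNIV. \<beta> j *\<^sub>R ptB j) + (\<Sum>j\<in>UNIV. \<gamma> j *\<^sub>R ptC j)) $ i = 0"
        using E by simp
      then show ?thesis unfolding T_def cc_def by (simp only: snd_add vector_add_component sndA sndB sndC)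
    qed
    have betaeq: "\<beta> j = (if j \<in> b then 2 * T else 0)" for j
    proof (cases "j \<in> b")
      case True
      then have "j \<notin> a \<or> j \<notin> c" using two[of j] by (cases "j\<in>a"; cases "j\<in>c") simp_all
      then have "\<alpha> j = 0 \<or> \<gamma> j = 0" unfolding \<alpha>_def \<gamma>_def g_def a_def c_def by auto
      then have "cc * (2 * T - \<beta> j) = 0" using E1[of j] E2[of j] by auto
      then show ?thesis using True ccpos by simp
    next
      case False
      then show ?thesis unfolding \<beta>_def g_def b_def by auto
    qed
    have "T = (\<Sum>j\<in>UNIV. if j \<in> b then 2 * T else 0)"
      unfolding T_def by (rule sum.cong) (auto simp: betaeq[unfolded T_def])
    also have "\<dots> = real (card b) * (2 * T)"
      by (simp add: sum.If_cases)
    finally have "T * (1 - 2 * real (card b)) = 0" by (simp add: algebra_simps)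
    moreover have "card b \<ge> 1" using bne by (simp add: Suc_le_eq card_gt_0_iff)
    ultimately have T0: "T = 0" by simp
    have z: "\<alpha> j = 0 \<and> \<beta> j = 0 \<and> \<gamma> j = 0" for j
      using betaeq[of j] E1[of j] E2[of j] T0 by simp
    from xS sub obtain j where "x = ptA j \<or> x = ptB j \<or> x = ptC j"
      unfolding setX_def setA_def setB_def setC_def by auto
    then show "f x = 0" using z[of j] xS unfolding \<alpha>_def \<beta>_def \<gamma>_def g_def by auto
  qed
  have "card S = dim (UNIV :: ((real^'k) \<times> (real^'k)) set)"
    using cardS by (simp add: dim_UNIV)
  then have "UNIV \<subseteq> span S" using card_eq_dim[of S UNIV] finS indep by simp
  then show ?thesis using indep by auto
qed

end
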